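(* Let $\kappa\in[0,1)$. Define $S_{q,\kappa}$ as the supremum of $$S=\langle\psi|A_0\otimes B_{0,0}|\psi\rangle+\langle\psi|A_0\otimes B_{1,0}|\psi\rangle+\langle\psi|A_1\otimes B_{0,1}|\psi\rangle-\langle\psi|A_1\otimes B_{1,1}|\psi\rangle$$ over all finite-dimensional Hilbert spaces $H_A,H_B$, unit vectors $|\psi\rangle\in H_A\otimes H_B$, binary observables $A_0,A_1$ on $H_A$ and binary observables $B_{y,x}$ ($x,y\in\{0,1\}$) on $H_B$ satisfying $\|B_{y,0}-B_{y,1}\|\le2\kappa$ for $y\in\{0,1\}$ (operator norm). Then $$S_{q,\kappa}=\begin{cases}2\sqrt2\big(\kappa+\sqrt{1-\kappa^2}\big),&\kappa\in[0,\tfrac1{\sqrt2}],\\ 4,&\kappa\in[\tfrac1{\sqrt2},1).\end{cases}$$ This value is attained with $|\psi\rangle=\frac1{\sqrt2}(|00\rangle+|11\rangle)$, $A_0=\sigma_z$, $A_1=\sigma_x$ and: for $\kappa\in[0,1/\sqrt2]$, $B_{0,0}=\frac{-\kappa+\sqrt{1-\kappa^2}}{\sqrt2}\sigma_x+\frac{\kappa+\sqrt{1-\kappa^2}}{\sqrt2}\sigma_z$, $B_{0,1}=\frac{\kappa+\sqrt{1-\kappa^2}}{\sqrt2}\sigma_x+\frac{-\kappa+\sqrt{1-\kappa^2}}{\sqrt2}\sigma_z$, $B_{1,0}=\frac{\kappa-\sqrt{1-\kappa^2}}{\sqrt2}\sigma_x+\frac{\kappa+\sqrt{1-\kappa^2}}{\sqrt2}\sigma_z$,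 $B_{1,1}=\frac{-\kappa-\sqrt{1-\kappa^2}}{\sqrt2}\sigma_x+\frac{-\kappa+\sqrt{1-\kappa^2}}{\sqrt2}\sigma_z$; for $\kappa\in[1/\sqrt2,1)$, $B_{0,0}=B_{1,0}=\sigma_z$, $B_{0,1}=\sigma_x$, $B_{1,1}=-\sigma_x$.
   Context: A binary observable on a Hilbert space $H$ is an operator $O=\Pi^0-\Pi^1$ where $\{\Pi^0,\Pi^1\}$ is a two-outcome POVM on $H$ (equivalently a Hermitian $O$ with $-\mathbb 1\le O\le\mathbb 1$); outcome $0$ corresponds to $+1$. $B_{y,x}$ is Bob's observable for his input $y$ when Alice's input $x$ is leaked to him; the constraint $\|B_{y,0}-B_{y,1}\|\le 2\kappa$ expresses that at most $\kappa$ of Alice's input information leaks to Bob. $\sigma_x,\sigma_z$ are the Pauli matrices. *)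

theory Defs
  imports "HOL-Analysis.Analysis" "Jordan_Normal_Form.Matrix"
begin

text \<open>Finite-dimensional Hilbert spaces are modelled as C^n (complex column vectors
of dimension n), operators as complex n x n matrices (Jordan_Normal_Form).\<close>

definition cinner :: "complex vec \<Rightarrow> complex vec \<Rightarrow> complex" where
  "cinner v w = (\<Sum>i<dim_vec v. cnj (v $ i) * w $ i)"

definition vnorm :: "complex vec \<Rightarrow> real" where
  "vnorm v = sqrt (\<Sum>i<dim_vec v. (cmod (v $ i))\<^sup>2)"

definition opnorm :: "complex mat \<Rightarrow> real" where
  "opnorm M = Sup {vnorm (M *\<^sub>v v) | v. v \<in> carrier_vec (dim_col M) \<and> vnorm v = 1}"

definition psd :: "nat \<Rightarrow> complex mat \<Rightarrow> bool" where
  "psd n P \<longleftrightarrow> P \<in> carrier_mat n n \<and>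
     (\<forall>v \<in> carrier_vec n. cinner v (P *\<^sub>v v) \<in> \<real> \<and> 0 \<le> Re (cinner v (P *\<^sub>v v)))"

definition binary_obs :: "nat \<Rightarrow> complex mat \<Rightarrow> bool" where
  "binary_obs n Ob \<longleftrightarrow> (\<exists>P0 P1. psd n P0 \<and> psd n P1 \<and> P0 + P1 = 1\<^sub>m n \<and> Ob = P0 - P1)"

text \<open>Kronecker (tensor) product; basis |i>|j> of C^m (x) C^n is index i*n+j.\<close>
definition kron :: "complex mat \<Rightarrow> complex mat \<Rightarrow> complex mat" where
  "kron A B = mat (dim_row A * dim_row B) (dim_col A * dim_col B)
     (\<lambda>(i, j). A $$ (i div dim_row B, j div dim_col B) * B $$ (i mod dim_row B, j mod dim_col B))"

definition expect :: "complex vec \<Rightarrow> complex mat \<Rightarrow> complex" where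
  "expect psi M = cinner psi (M *\<^sub>v psi)"

text \<open>Admissible strategy: dim H_A = m, dim H_B = n, Bij = B_{y=i, x=j}.\<close>
definition chsh_config ::
  "real \<Rightarrow> nat \<Rightarrow> nat \<Rightarrow> complex vec \<Rightarrow> complex mat \<Rightarrow> complex mat \<Rightarrow>
   complex mat \<Rightarrow> complex mat \<Rightarrow> complex mat \<Rightarrow> complex mat \<Rightarrow> bool" where
  "chsh_config \<kappa> m n psi A0 A1 B00 B01 B10 B11 \<longleftrightarrow>
     psi \<in> carrier_vec (m * n) \<and> vnorm psi = 1 \<and>
     binary_obs m A0 \<and> binary_obs m A1 \<and>
     binary_obs n B00 \<and> binary_obs n B01 \<and> binary_obs n B10 \<and> binary_obs n B11 \<and>
     opnorm (B00 - B01) \<le> 2 * \<kappa> \<and> opnorm (B10 - B11) \<le> 2 * \<kappa>"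

text \<open>The score S (real part; it is real for Hermitian observables).\<close>
definition chsh_score ::
  "complex vec \<Rightarrow> complex mat \<Rightarrow> complex mat \<Rightarrow>
   complex mat \<Rightarrow> complex mat \<Rightarrow> complex mat \<Rightarrow> complex mat \<Rightarrow> real" where
  "chsh_score psi A0 A1 B00 B01 B10 B11 =
     Re (expect psi (kron A0 B00) + expect psi (kron A0 B10)
       + expect psi (kron A1 B01) - expect psi (kron A1 B11))"

definition chsh_vals :: "real \<Rightarrow> real set" where
  "chsh_vals \<kappa> = {chsh_score psi A0 A1 B00 B01 B10 B11 | m n psi A0 A1 B00 B01 B10 B11.
      chsh_config \<kappa> m n psi A0 A1 B00 B01 B10 B11}"

definition S_q :: "real \<Rightarrow> real" where
  "S_q \<kappa> = Sup (chsh_vals \<kappa>)"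

definition sigma_x :: "complex mat" where
  "sigma_x = mat_of_rows_list 2 [[0, 1], [1, 0]]"

definition sigma_z :: "complex mat" where
  "sigma_z = mat_of_rows_list 2 [[1, 0], [0, -1]]"

definition phi_plus :: "complex vec" where
  "phi_plus = vec_of_list [1 / sqrt 2, 0, 0, 1 / sqrt 2]"

end

theory Submission
  imports Defs
begin


lemma real_id:
  fixes p q a b c d :: real
  assumes "p^2 + q^2 = 1"
  shows "(p - q + 1) * (a^2 + b^2 + c^2 + d^2) + q * ((a - c)^2 + (b - d)^2) - p * ((a + b)^2 + (c - d)^2)
    = ((a - p*b - q*c)^2 + (-p*a + b - q*d)^2 + (-q*a + c + p*d)^2 + (-q*b + p*c + d)^2) / 2"
proof -
  have e: "p^2 = 1 - q^2" using assms by simp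
  have "2 * ((p - q + 1) * (a^2 + b^2 + c^2 + d^2) + q * ((a - c)^2 + (b - d)^2) - p * ((a + b)^2 + (c - d)^2))
    = ((a - p*b - q*c)^2 + (-p*a + b - q*d)^2 + (-q*a + c + p*d)^2 + (-q*b + p*c + d)^2)"
    by (simp add: power2_eq_square algebra_simps e[unfolded power2_eq_square])
  then show ?thesis by simp
qed

definition sq :: "'a set \<Rightarrow> ('a \<Rightarrow> complex) \<Rightarrow> real" where
  "sq I f = (\<Sum>i\<in>I. (cmod (f i))^2)"

lemma sq_nonneg: "0 \<le> sq I f"
  unfolding sq_def by (simp add: sum_nonneg)

lemma complex_id:
  fixes a b c d :: complex and p q :: real
  assumes "p^2 + q^2 = 1"
  shows "(p - q + 1) * ((cmod a)^2 + (cmod b)^2 + (cmod c)^2 + (cmod d)^2) + q * ((cmod (a - c))^2 + (cmod (b - d))^2)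
     - p * ((cmod (a + b))^2 + (cmod (c - d))^2)
    = ((cmod (a - p*b - q*c))^2 + (cmod (-p*a + b - q*d))^2 + (cmod (-q*a + c + p*d))^2 + (cmod (-q*b + p*c + d))^2) / 2"
  using real_id[OF assms, of "Re a" "Re b" "Re c" "Re d"] real_id[OF assms, of "Im a" "Im b" "Im c" "Im d"]
  unfolding cmod_power2 by (simp add: algebra_simps)

lemma sq_comb_nonneg:
  fixes a b c d :: "'a \<Rightarrow> complex" and p q :: real
  assumes "p^2 + q^2 = 1"
  shows "p * (sq I (\<lambda>i. a i + b i) + sq I (\<lambda>i. c i - d i)) \<le>
    (p - q + 1) * (sq I a + sq I b + sq I c + sq I d) + q * (sq I (\<lambda>i. a i - c i) + sq I (\<lambda>i. b i - d i))"
proof -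
  have "0 \<le> (\<Sum>i\<in>I. (p - q + 1) * ((cmod (a i))^2 + (cmod (b i))^2 + (cmod (c i))^2 + (cmod (d i))^2) + q * ((cmod (a i - c i))^2 + (cmod (b i - d i))^2)
     - p * ((cmod (a i + b i))^2 + (cmod (c i - d i))^2))"
    by (rule sum_nonneg, subst complex_id[OF assms], simp)
  then show ?thesis
    unfolding sq_def by (simp add: sum.distrib sum_subtractf sum_distrib_left algebra_simps)
qed

lemma parallelogram: "(cmod (a + b))^2 + (cmod (a - b))^2 = 2 * (cmod a)^2 + 2 * (cmod b)^2"
  unfolding cmod_power2 by (simp add: power2_eq_square algebra_simps)

lemma sq_zero_eq:
  assumes "finite I" "sq I (\<lambda>i. a i - c i) \<le> 0" "i \<in> I"
  shows "c i = a i"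
proof -
  have "sq I (\<lambda>i. a i - c i) = 0" using assms(2) sq_nonneg[of I] by (meson order_antisym)
  then have "\<forall>i\<in>I. (cmod (a i - c i))^2 = 0" unfolding sq_def
    using sum_nonneg_eq_0_iff[OF assms(1)] by (simp add: sum_nonneg_eq_0_iff[OF assms(1)])
  then show ?thesis using assms(3) by simp
qed

lemma relax_sq:
  fixes a b c d :: "'a \<Rightarrow> complex" and k :: real
  assumes fin: "finite I" and k0: "0 \<le> k" and k1: "k \<le> 1 / sqrt 2"
    and na: "sq I a \<le> 1" and nb: "sq I b \<le> 1" and nc: "sq I c \<le> 1" and nd: "sq I d \<le> 1"
    and dac: "sq I (\<lambda>i. a i - c i) \<le> 4 * k^2" and dbd: "sq I (\<lambda>i. b i - d i) \<le> 4 * k^2"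
  shows "sq I (\<lambda>i. a i + b i) + sq I (\<lambda>i. c i - d i) \<le> 4 * (k + sqrt (1 - k^2))^2"
proof (cases "k = 0")
  case True
  then have ca: "\<And>i. i \<in> I \<Longrightarrow> c i = a i" and db: "\<And>i. i \<in> I \<Longrightarrow> d i = b i"
    using sq_zero_eq[OF fin] dac dbd by auto
  have "sq I (\<lambda>i. a i + b i) + sq I (\<lambda>i. c i - d i) = (\<Sum>i\<in>I. (cmod (a i + b i))^2 + (cmod (a i - b i))^2)"
    unfolding sq_def by (simp add: sum.distrib ca db)
  also have "\<dots> = 2 * sq I a + 2 * sq I b"
    unfolding parallelogram sq_def by (simp add: sum.distrib sum_distrib_left)
  also have "\<dots> \<le> 4" using na nb by simp
  finally show ?thesis using True by simp
next
  case False
  then have kp: "0 < k" using k0 by simp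
  have k2: "k^2 \<le> 1/2" using k1 k0
    by (metis power_mono real_sqrt_pow2 [of 2] power_divide one_power2 zero_le_numeral real_sqrt_ge_zero numeral_One zero_less_numeral)
  define c0 where "c0 = sqrt (1 - k^2)"
  have c0sq: "c0^2 = 1 - k^2" unfolding c0_def using k2 by simp
  have c0p: "0 < c0" unfolding c0_def using k2 by simp
  define p where "p = 2 * k * c0"
  define q where "q = 1 - 2 * k^2"
  have "p^2 = 4 * k^2 * (1 - k^2)" unfolding p_def using c0sq by (simp add: power_mult_distrib)
  then have pq: "p^2 + q^2 = 1" unfolding q_def by (simp add: power2_eq_square algebra_simps)
  have pp: "0 < p" unfolding p_def using kp c0p by simp
  have q0: "0 \<le> q" unfolding q_def using k2 by simp
  have q1: "0 \<le> p - q + 1" unfolding q_def using pp k0 by simp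
  have "p * (sq I (\<lambda>i. a i + b i) + sq I (\<lambda>i. c i - d i)) \<le>
    (p - q + 1) * (sq I a + sq I b + sq I c + sq I d) + q * (sq I (\<lambda>i. a i - c i) + sq I (\<lambda>i. b i - d i))"
    by (rule sq_comb_nonneg[OF pq])
  also have "\<dots> \<le> (p - q + 1) * 4 + q * (8 * k^2)"
    by (intro add_mono mult_left_mono) (use na nb nc nd dac dbd q0 q1 in auto)
  also have "\<dots> = p * (4 * (k + c0)^2)"
  proof -
    have e1: "(k + c0)^2 = 1 + 2*k*c0" using c0sq by (simp add: power2_sum)
    have "p * (4 * (k + c0)^2) = 8*k*c0 + 16 * k^2 * c0^2" unfolding e1 p_def
      by (simp add: power2_eq_square algebra_simps)
    also have "\<dots> = 8*k*c0 + 16 * k^2 * (1 - k^2)" using c0sq by simp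
    finally show ?thesis unfolding p_def q_def by (simp add: power2_eq_square algebra_simps)
  qed
  finally show ?thesis unfolding c0_def[symmetric] using pp by simp
qed

lemma sqrt_sum_le: "0 \<le> x \<Longrightarrow> 0 \<le> y \<Longrightarrow> sqrt x + sqrt y \<le> sqrt (2 * (x + y))"
proof -
  assume x: "0 \<le> x" and y: "0 \<le> y"
  have "0 \<le> (sqrt x - sqrt y)^2" by simp
  then have "(sqrt x + sqrt y)^2 \<le> 2 * (x + y)"
    using x y by (simp add: power2_eq_square algebra_simps)
  then show ?thesis
    by (metis real_le_rsqrt)
qed



lemma cs_sum:
  fixes f g :: "'a \<Rightarrow> complex"
  shows "Re (\<Sum>i\<in>I. cnj (f i) * g i) \<le> sqrt (sq I f) * sqrt (sq I g)"
proof -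
  have "Re (\<Sum>i\<in>I. cnj (f i) * g i) = (\<Sum>i\<in>I. Re (cnj (f i) * g i))" by (simp add: Re_sum)
  also have "\<dots> \<le> (\<Sum>i\<in>I. \<bar>cmod (f i)\<bar> * \<bar>cmod (g i)\<bar>)"
    by (rule sum_mono) (metis abs_norm_cancel complex_Re_le_cmod complex_mod_cnj norm_mult)
  also have "\<dots> \<le> L2_set (\<lambda>i. cmod (f i)) I * L2_set (\<lambda>i. cmod (g i)) I" by (rule L2_set_mult_ineq)
  finally show ?thesis unfolding L2_set_def sq_def .
qed

lemma cmod_add_sq: "(cmod (a + b))^2 = (cmod a)^2 + (cmod b)^2 + 2 * Re (cnj a * b)"
  unfolding cmod_power2 by (simp add: power2_eq_square algebra_simps)

lemma sq_add: "sq I (\<lambda>i. f i + g i) = sq I f + sq I g + 2 * Re (\<Sum>i\<in>I. cnj (f i) * g i)"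
  unfolding sq_def cmod_add_sq by (simp add: sum.distrib Re_sum sum_distrib_left)

lemma sq_triangle: "sqrt (sq I (\<lambda>i. f i + g i)) \<le> sqrt (sq I f) + sqrt (sq I g)"
proof -
  have "sq I (\<lambda>i. f i + g i) \<le> (sqrt (sq I f) + sqrt (sq I g))^2"
    using cs_sum[of f g I] sq_nonneg[of I f] sq_nonneg[of I g]
    by (simp add: sq_add power2_sum)
  then show ?thesis
    by (simp add: real_le_lsqrt sq_nonneg)
qed

lemma sq_triangle_minus: "sqrt (sq I (\<lambda>i. f i - g i)) \<le> sqrt (sq I f) + sqrt (sq I g)"
proof -
  have "sqrt (sq I (\<lambda>i. f i + (- g i))) \<le> sqrt (sq I f) + sqrt (sq I (\<lambda>i. - g i))" by (rule sq_triangle)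
  moreover have "sq I (\<lambda>i. - g i) = sq I g" unfolding sq_def by simp
  ultimately show ?thesis by simp
qed

lemma mv_index:
  assumes "M \<in> carrier_mat k n" "v \<in> carrier_vec n" "i < k"
  shows "(M *\<^sub>v v) $ i = (\<Sum>j<n. M $$ (i,j) * v $ j)"
  using assms by (auto simp: scalar_prod_def atLeast0LessThan intro!: sum.cong)

lemma vnorm_sq: "vnorm v = sqrt (sq {..<dim_vec v} (\<lambda>i. v $ i))"
  unfolding vnorm_def sq_def ..

lemma cinner_self: "cinner v v = of_real (sq {..<dim_vec v} (\<lambda>i. v $ i))"
  unfolding cinner_def sq_def of_real_sum by (rule sum.cong[OF refl]) (metis complex_norm_square mult.commute)

lemma cinner_add_right: "v \<in> carrier_vec n \<Longrightarrow> w \<in> carrier_vec n \<Longrightarrow> u \<in> carrier_vec n \<Longrightarrow>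
   cinner u (v + w) = cinner u v + cinner u w"
  unfolding cinner_def by (simp add: sum.distrib ring_distribs)

lemma cinner_add_left: "v \<in> carrier_vec n \<Longrightarrow> w \<in> carrier_vec n \<Longrightarrow> u \<in> carrier_vec n \<Longrightarrow>
   cinner (v + w) u = cinner v u + cinner w u"
  unfolding cinner_def by (simp add: sum.distrib ring_distribs)

lemma cinner_swap: "v \<in> carrier_vec n \<Longrightarrow> u \<in> carrier_vec n \<Longrightarrow> cinner u v = cnj (cinner v u)"
  unfolding cinner_def by (simp add: cnj_sum mult.commute)

definition herm :: "complex mat \<Rightarrow> nat \<Rightarrow> bool" where
  "herm P n \<longleftrightarrow> P \<in> carrier_mat n n \<and> (\<forall>i<n. \<forall>j<n. cnj (P $$ (j,i)) = P $$ (i,j))"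

lemma herm_move:
  assumes h: "herm P n" and u: "u \<in> carrier_vec n" and w: "w \<in> carrier_vec n"
  shows "cinner u (P *\<^sub>v w) = cinner (P *\<^sub>v u) w"
proof -
  have P: "P \<in> carrier_mat n n" using h unfolding herm_def by blast
  have he: "\<And>i j. i < n \<Longrightarrow> j < n \<Longrightarrow> cnj (P $$ (j,i)) = P $$ (i,j)" using h unfolding herm_def by blast
  have du: "dim_vec u = n" using u by simp
  have dP: "dim_vec (P *\<^sub>v u) = n" using P by simp
  have "cinner u (P *\<^sub>v w) = (\<Sum>i<n. cnj (u $ i) * (\<Sum>j<n. P $$ (i,j) * w $ j))"
    unfolding cinner_def du by (intro sum.cong refl) (simp add: mv_index[OF P w])
  also have "\<dots> = (\<Sum>i<n. \<Sum>j<n. cnj (u $ i) * P $$ (i,j) * w $ j)"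
    by (simp add: sum_distrib_left mult.assoc)
  also have "\<dots> = (\<Sum>j<n. \<Sum>i<n. cnj (u $ i) * P $$ (i,j) * w $ j)" by (rule sum.swap)
  also have "\<dots> = (\<Sum>j<n. cnj (\<Sum>i<n. P $$ (j,i) * u $ i) * w $ j)"
  proof (intro sum.cong refl)
    fix j assume j: "j \<in> {..<n}"
    have "cnj (\<Sum>i<n. P $$ (j,i) * u $ i) * w $ j = (\<Sum>i<n. cnj (P $$ (j,i)) * cnj (u $ i) * w $ j)"
      by (simp add: cnj_sum sum_distrib_right)
    also have "\<dots> = (\<Sum>i<n. cnj (u $ i) * P $$ (i,j) * w $ j)"
      by (intro sum.cong refl) (use j he in auto)
    finally show "(\<Sum>i<n. cnj (u $ i) * P $$ (i,j) * w $ j) = cnj (\<Sum>i<n. P $$ (j,i) * u $ i) * w $ j" by simp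
  qed
  also have "\<dots> = cinner (P *\<^sub>v u) w"
    unfolding cinner_def dP by (intro sum.cong refl) (simp add: mv_index[OF P u])
  finally show ?thesis .
qed

lemma sum_two:
  assumes "i < n" "j < n" "i \<noteq> j" "\<And>k. k < n \<Longrightarrow> k \<noteq> i \<Longrightarrow> k \<noteq> j \<Longrightarrow> h k = 0"
  shows "(\<Sum>k<(n::nat). h k) = h i + h j"
proof -
  have "(\<Sum>k<n. h k) = (\<Sum>k\<in>{i,j}. h k)"
    by (rule sum.mono_neutral_right) (use assms in auto)
  then show ?thesis using assms(3) by simp
qed

lemma sum_one:
  assumes "i < n" "\<And>k. k < n \<Longrightarrow> k \<noteq> i \<Longrightarrow> h k = 0"
  shows "(\<Sum>k<(n::nat). h k) = h i"
proof -
  have "(\<Sum>k<n. h k) = (\<Sum>k\<in>{i}. h k)"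
    by (rule sum.mono_neutral_right) (use assms in auto)
  then show ?thesis by simp
qed

lemma quad_two:
  fixes x y :: complex
  assumes P: "P \<in> carrier_mat n n" and ij: "i < n" "j < n" "i \<noteq> j"
  defines "f \<equiv> (\<lambda>k. if k = i then x else if k = j then y else 0)"
  shows "cinner (vec n f) (P *\<^sub>v vec n f) =
    cnj x * (P $$ (i,i) * x + P $$ (i,j) * y) + cnj y * (P $$ (j,i) * x + P $$ (j,j) * y)"
proof -
  have fv: "vec n f \<in> carrier_vec n" by simp
  have inner: "(P *\<^sub>v vec n f) $ k = P $$ (k,i) * x + P $$ (k,j) * y" if "k < n" for k
  proof -
    have "(P *\<^sub>v vec n f) $ k = (\<Sum>l<n. P $$ (k,l) * vec n f $ l)" by (rule mv_index[OF P fv that])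
    also have "\<dots> = P $$ (k,i) * vec n f $ i + P $$ (k,j) * vec n f $ j"
      by (rule sum_two[OF ij]) (simp add: f_def)
    finally show ?thesis using ij by (simp add: f_def)
  qed
  have "cinner (vec n f) (P *\<^sub>v vec n f) = (\<Sum>k<n. cnj (vec n f $ k) * (P *\<^sub>v vec n f) $ k)"
    unfolding cinner_def by simp
  also have "\<dots> = cnj (vec n f $ i) * (P *\<^sub>v vec n f) $ i + cnj (vec n f $ j) * (P *\<^sub>v vec n f) $ j"
    by (rule sum_two[OF ij]) (simp add: f_def)
  finally show ?thesis using ij by (simp add: inner, simp add: f_def)
qed

lemma quad_one:
  assumes P: "P \<in> carrier_mat n n" and i: "i < n"
  defines "f \<equiv> (\<lambda>k. if k = i then (1::complex) else 0)"
  shows "cinner (vec n f) (P *\<^sub>v vec n f) = P $$ (i,i)"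
proof -
  have fv: "vec n f \<in> carrier_vec n" by simp
  have inner: "(P *\<^sub>v vec n f) $ k = P $$ (k,i)" if "k < n" for k
  proof -
    have "(P *\<^sub>v vec n f) $ k = (\<Sum>l<n. P $$ (k,l) * vec n f $ l)" by (rule mv_index[OF P fv that])
    also have "\<dots> = P $$ (k,i) * vec n f $ i"
      by (rule sum_one[OF i]) (simp add: f_def)
    finally show ?thesis using i by (simp add: f_def)
  qed
  have "cinner (vec n f) (P *\<^sub>v vec n f) = (\<Sum>k<n. cnj (vec n f $ k) * (P *\<^sub>v vec n f) $ k)"
    unfolding cinner_def by simp
  also have "\<dots> = cnj (vec n f $ i) * (P *\<^sub>v vec n f) $ i"
    by (rule sum_one[OF i]) (simp add: f_def)
  finally show ?thesis using i by (simp add: inner, simp add: f_def)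
qed

lemma psd_herm:
  assumes "psd n P" shows "herm P n"
proof -
  have P: "P \<in> carrier_mat n n" using assms psd_def by auto
  have re: "cinner v (P *\<^sub>v v) \<in> \<real>" if "v \<in> carrier_vec n" for v
    using assms that psd_def by auto
  have diag: "Im (P $$ (i,i)) = 0" if "i < n" for i
    using re[of "vec n (\<lambda>k. if k = i then 1 else 0)"] quad_one[OF P that]
    by (simp add: complex_is_Real_iff)
  have "cnj (P $$ (j,i)) = P $$ (i,j)" if ij: "i < n" "j < n" for i j
  proof (cases "i = j")
    case True
    then show ?thesis using diag[OF ij(1)] by (simp add: complex_eq_iff)
  next
    case False
    have e1: "Im (P $$ (i,i) + P $$ (i,j) + (P $$ (j,i) + P $$ (j,j))) = 0"
      using re[of "vec n (\<lambda>k. if k = i then 1 else if k = j then 1 else 0)"] quad_two[OF P ij False, of 1 1]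
      by (simp add: complex_is_Real_iff)
    have e2: "Im (P $$ (i,i) + P $$ (i,j) * \<i> + (- \<i>) * (P $$ (j,i) + P $$ (j,j) * \<i>)) = 0"
      using re[of "vec n (\<lambda>k. if k = i then 1 else if k = j then \<i> else 0)"] quad_two[OF P ij False, of 1 \<i>]
      by (simp add: complex_is_Real_iff)
    show ?thesis using e1 e2 diag[OF ij(1)] diag[OF ij(2)] by (simp add: complex_eq_iff algebra_simps)
  qed
  then show ?thesis unfolding herm_def using P by auto
qed

lemma herm_minus: "herm A n \<Longrightarrow> herm B n \<Longrightarrow> herm (A - B) n"
  unfolding herm_def by auto

lemma cmod_minus_sq: "(cmod (a - b))^2 = (cmod (a + b))^2 - 4 * Re (cnj a * b)"
  unfolding cmod_power2 by (simp add: power2_eq_square algebra_simps)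

lemma binary_obs_herm: "binary_obs n B \<Longrightarrow> herm B n"
  unfolding binary_obs_def using psd_herm herm_minus by blast

lemma binary_obs_carrier: "binary_obs n B \<Longrightarrow> B \<in> carrier_mat n n"
  using binary_obs_herm herm_def by blast

lemma obs_bound_sq:
  assumes B: "binary_obs n B" and v: "v \<in> carrier_vec n"
  shows "sq {..<n} (\<lambda>i. (B *\<^sub>v v) $ i) \<le> sq {..<n} (\<lambda>i. v $ i)"
proof -
  obtain P0 P1 where p0: "psd n P0" and p1: "psd n P1" and s: "P0 + P1 = 1\<^sub>m n" and Bd: "B = P0 - P1"
    using B binary_obs_def by blast
  have P0: "P0 \<in> carrier_mat n n" and P1: "P1 \<in> carrier_mat n n" using p0 p1 psd_def by auto
  have h0: "herm P0 n" using psd_herm[OF p0] .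
  define x where "x = P0 *\<^sub>v v"
  define y where "y = P1 *\<^sub>v v"
  define z where "z = x - P0 *\<^sub>v x"
  have xc: "x \<in> carrier_vec n" and yc: "y \<in> carrier_vec n" and zc: "z \<in> carrier_vec n"
    unfolding x_def y_def z_def using P0 P1 v by auto
  have xy: "x + y = v"
  proof -
    have "x + y = (P0 + P1) *\<^sub>v v" unfolding x_def y_def using P0 P1 v by (simp add: add_mult_distrib_mat_vec)
    then show ?thesis using s v by simp
  qed
  have xyi: "x $ i + y $ i = v $ i" if "i < n" for i using xy that xc yc
    by (metis index_add_vec(1) carrier_vecD)
  have Bv: "B *\<^sub>v v = x - y" unfolding Bd x_def y_def using P0 P1 v by (simp add: minus_mult_distrib_mat_vec)
  have P1x: "P1 *\<^sub>v x = z"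
  proof -
    have "P0 *\<^sub>v x + P1 *\<^sub>v x = (P0 + P1) *\<^sub>v x" using P0 P1 xc by (simp add: add_mult_distrib_mat_vec)
    also have "\<dots> = x" using s xc by simp
    finally have e: "P0 *\<^sub>v x + P1 *\<^sub>v x = x" .
    show ?thesis
    proof (rule eq_vecI)
      fix i assume "i < dim_vec z"
      then have i: "i < n" using zc by auto
      have "(P0 *\<^sub>v x) $ i + (P1 *\<^sub>v x) $ i = x $ i" using e i P0 P1
        by (metis carrier_matD(1) dim_mult_mat_vec index_add_vec(1))
      then show "(P1 *\<^sub>v x) $ i = z $ i" unfolding z_def using i P0 xc by (simp add: algebra_simps)
    qed (use P1 zc in auto)
  qed
  have P0y: "P0 *\<^sub>v y = z"
  proof -
    have "P0 *\<^sub>v x + P0 *\<^sub>v y = P0 *\<^sub>v (x + y)" using P0 xc yc by (simp add: mult_add_distrib_mat_vec)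
    then have e: "P0 *\<^sub>v x + P0 *\<^sub>v y = x" using xy x_def by simp
    show ?thesis
    proof (rule eq_vecI)
      fix i assume "i < dim_vec z"
      then have i: "i < n" using zc by auto
      have "(P0 *\<^sub>v x) $ i + (P0 *\<^sub>v y) $ i = x $ i" using e i P0
        by (metis carrier_matD(1) dim_mult_mat_vec index_add_vec(1))
      then show "(P0 *\<^sub>v y) $ i = z $ i" unfolding z_def using i P0 xc by (simp add: algebra_simps)
    qed (use P0 zc in auto)
  qed
  have key: "cinner x y = cinner x (P1 *\<^sub>v x) + cinner y (P0 *\<^sub>v y)"
  proof -
    have "cinner x y = cinner v (P0 *\<^sub>v y)" unfolding x_def using herm_move[OF h0 v yc] by simp
    also have "\<dots> = cinner (x + y) z" using xy P0y by simp
    also have "\<dots> = cinner x z + cinner y z" using cinner_add_left[OF xc yc zc] .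
    finally show ?thesis using P1x P0y by simp
  qed
  have r1: "0 \<le> Re (cinner x (P1 *\<^sub>v x))" using p1 xc psd_def by auto
  have r2: "0 \<le> Re (cinner y (P0 *\<^sub>v y))" using p0 yc psd_def by auto
  have rxy: "0 \<le> Re (cinner x y)" using key r1 r2 by simp
  have "sq {..<n} (\<lambda>i. (B *\<^sub>v v) $ i) = (\<Sum>i<n. (cmod (x $ i - y $ i))^2)"
    unfolding sq_def Bv using xc yc by (intro sum.cong refl) simp
  also have "\<dots> = (\<Sum>i<n. (cmod (v $ i))^2 - 4 * Re (cnj (x $ i) * y $ i))"
    by (intro sum.cong refl) (simp add: cmod_minus_sq xyi)
  also have "\<dots> = sq {..<n} (\<lambda>i. v $ i) - 4 * Re (cinner x y)"
    unfolding sq_def cinner_def using xc by (simp add: sum_subtractf sum_distrib_left Re_sum)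
  finally show ?thesis using rxy by simp
qed

lemma obs_bound:
  assumes B: "binary_obs n B" and v: "v \<in> carrier_vec n"
  shows "vnorm (B *\<^sub>v v) \<le> vnorm v"
proof -
  have "dim_vec (B *\<^sub>v v) = n" using binary_obs_carrier[OF B] by simp
  then show ?thesis unfolding vnorm_sq using obs_bound_sq[OF B v] v by simp
qed



lemma sq_prod: "sq (A \<times> B) f = (\<Sum>x\<in>A. \<Sum>y\<in>B. (cmod (f (x,y)))^2)"
  unfolding sq_def by (simp add: sum.cartesian_product)

lemma sum_split: "(\<Sum>r<m*n. f r) = (\<Sum>i<m. \<Sum>j<(n::nat). f (i*n+j))"
proof (induction m)
  case 0 then show ?case by simp
next
  case (Suc m)
  have "(\<Sum>r<Suc m * n. f r) = (\<Sum>r<m*n. f r) + (\<Sum>r\<in>{m*n..<m*n+n}. f r)"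
    using sum.atLeastLessThan_concat[of 0 "m*n" "m*n+n" f] by (simp add: atLeast0LessThan add.commute)
  also have "(\<Sum>r\<in>{m*n..<m*n+n}. f r) = (\<Sum>j<n. f (m*n+j))"
    using sum.shift_bounds_nat_ivl[of f 0 "m*n" n] by (simp add: atLeast0LessThan add.commute)
  finally show ?case using Suc by simp
qed

lemma divmod_aux: "j < n \<Longrightarrow> (i*n+j) div n = i \<and> (i*n+(j::nat)) mod n = j"
  by auto

lemma idx_bound: "i < m \<Longrightarrow> j < n \<Longrightarrow> i*n+j < m*(n::nat)"
proof -
  assume "i < m" "j < n"
  then have "i*n + j < i*n + n" by simp
  also have "\<dots> = (i+1)*n" by simp
  also have "\<dots> \<le> m*n" using \<open>i < m\<close> by (intro mult_right_mono) auto
  finally show ?thesis .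
qed

lemma vnorm_smult: "vnorm (c \<cdot>\<^sub>v v) = cmod c * vnorm v"
proof -
  have "(\<Sum>i<dim_vec v. (cmod ((c \<cdot>\<^sub>v v) $ i))\<^sup>2) = (cmod c)^2 * (\<Sum>i<dim_vec v. (cmod (v $ i))\<^sup>2)"
    by (simp add: sum_distrib_left norm_mult power_mult_distrib)
  then show ?thesis unfolding vnorm_def by (simp add: real_sqrt_mult)
qed

lemma vnorm_nonneg: "0 \<le> vnorm v" unfolding vnorm_def by (simp add: sum_nonneg)

lemma opnorm_le:
  assumes M: "M \<in> carrier_mat n n" and bd: "\<And>v. v \<in> carrier_vec n \<Longrightarrow> vnorm v = 1 \<Longrightarrow> vnorm (M *\<^sub>v v) \<le> C"
    and v: "v \<in> carrier_vec n"
  shows "vnorm (M *\<^sub>v v) \<le> opnorm M * vnorm v"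
proof (cases "vnorm v = 0")
  case True
  then have "sq {..<n} (\<lambda>i. v $ i) = 0" using v unfolding vnorm_sq by simp
  then have z: "\<forall>i\<in>{..<n}. (cmod (v $ i))^2 = 0" unfolding sq_def
    by (subst sum_nonneg_eq_0_iff[symmetric]) auto
  have "(M *\<^sub>v v) $ i = 0" if "i < n" for i
    using z by (simp add: mv_index[OF M v that])
  then have "sq {..<n} (\<lambda>i. (M *\<^sub>v v) $ i) = 0" unfolding sq_def by simp
  then have "vnorm (M *\<^sub>v v) = 0" using M unfolding vnorm_sq by simp
  then show ?thesis using True by simp
next
  case False
  define t where "t = vnorm v"
  have tp: "0 < t" using False vnorm_nonneg[of v] unfolding t_def by simp
  define v' where "v' = complex_of_real (1/t) \<cdot>\<^sub>v v"
  have v'c: "v' \<in> carrier_vec n" unfolding v'_def using v by simp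
  have v'n: "vnorm v' = 1" unfolding v'_def vnorm_smult t_def[symmetric] using tp by (simp add: norm_divide)
  have Mv': "M *\<^sub>v v' = complex_of_real (1/t) \<cdot>\<^sub>v (M *\<^sub>v v)" unfolding v'_def using M v by (simp add: mult_mat_vec)
  have dc: "dim_col M = n" using M by simp
  have bdd: "bdd_above {vnorm (M *\<^sub>v v) | v. v \<in> carrier_vec (dim_col M) \<and> vnorm v = 1}"
    unfolding dc using bd by (auto intro!: bdd_aboveI)
  have "vnorm (M *\<^sub>v v') \<le> opnorm M" unfolding opnorm_def
    by (rule cSup_upper[OF _ bdd]) (use v'c v'n dc in auto)
  then have "(1/t) * vnorm (M *\<^sub>v v) \<le> opnorm M" unfolding Mv' vnorm_smult using tp by (simp add: norm_divide)
  then show ?thesis unfolding t_def[symmetric] using tp by (simp add: field_simps)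
qed

lemma sq_vec_minus: "a \<in> carrier_vec n \<Longrightarrow> b \<in> carrier_vec n \<Longrightarrow>
  sq {..<n} (($) (a - b)) = sq {..<n} (\<lambda>i. a $ i - b $ i)"
  unfolding sq_def by (intro sum.cong refl) auto

lemma diff_bound:
  assumes B0: "binary_obs n B0" and B1: "binary_obs n B1" and op: "opnorm (B0 - B1) \<le> 2 * k" and k: "0 \<le> k"
    and v: "v \<in> carrier_vec n"
  shows "sq {..<n} (\<lambda>j. (B0 *\<^sub>v v) $ j - (B1 *\<^sub>v v) $ j) \<le> 4 * k^2 * sq {..<n} (\<lambda>j. v $ j)"
proof -
  have c0: "B0 \<in> carrier_mat n n" and c1: "B1 \<in> carrier_mat n n" using B0 B1 binary_obs_carrier by auto
  have M: "B0 - B1 \<in> carrier_mat n n" using c1 by (rule minus_carrier_mat)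
  have mv: "(B0 - B1) *\<^sub>v w = B0 *\<^sub>v w - B1 *\<^sub>v w" if "w \<in> carrier_vec n" for w
    using c0 c1 that by (simp add: minus_mult_distrib_mat_vec)
  have vn: "vnorm u = sqrt (sq {..<n} (\<lambda>i. u $ i))" if "u \<in> carrier_vec n" for u
    using that unfolding vnorm_sq by simp
  have bd: "vnorm ((B0 - B1) *\<^sub>v w) \<le> 2" if w: "w \<in> carrier_vec n" "vnorm w = 1" for w
  proof -
    have "vnorm ((B0 - B1) *\<^sub>v w) = sqrt (sq {..<n} (\<lambda>i. (B0 *\<^sub>v w) $ i - (B1 *\<^sub>v w) $ i))"
      using vn[of "(B0 - B1) *\<^sub>v w"] M w c0 c1 by (simp add: mv sq_vec_minus)
    also have "\<dots> \<le> sqrt (sq {..<n} (\<lambda>i. (B0 *\<^sub>v w) $ i)) + sqrt (sq {..<n} (\<lambda>i. (B1 *\<^sub>v w) $ i))"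
      by (rule sq_triangle_minus)
    also have "\<dots> \<le> 1 + 1"
    proof (rule add_mono)
      show "sqrt (sq {..<n} (\<lambda>i. (B0 *\<^sub>v w) $ i)) \<le> 1"
        using obs_bound[OF B0 w(1)] w c0 vn[of "B0 *\<^sub>v w"] vn[of w] by simp
      show "sqrt (sq {..<n} (\<lambda>i. (B1 *\<^sub>v w) $ i)) \<le> 1"
        using obs_bound[OF B1 w(1)] w c1 vn[of "B1 *\<^sub>v w"] vn[of w] by simp
    qed
    finally show ?thesis by simp
  qed
  have "vnorm ((B0 - B1) *\<^sub>v v) \<le> opnorm (B0 - B1) * vnorm v" by (rule opnorm_le[OF M bd v])
  also have "\<dots> \<le> 2 * k * vnorm v" by (rule mult_right_mono[OF op vnorm_nonneg])
  finally have "sqrt (sq {..<n} (\<lambda>i. (B0 *\<^sub>v v) $ i - (B1 *\<^sub>v v) $ i)) \<le> 2 * k * sqrt (sq {..<n} (\<lambda>j. v $ j))"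
    using vn[of "(B0 - B1) *\<^sub>v v"] vn[OF v] M v c0 c1 by (simp add: mv sq_vec_minus)
  then have "(sqrt (sq {..<n} (\<lambda>i. (B0 *\<^sub>v v) $ i - (B1 *\<^sub>v v) $ i)))^2 \<le> (2 * k * sqrt (sq {..<n} (\<lambda>j. v $ j)))^2"
    by (rule power_mono) (simp add: sq_nonneg)
  then show ?thesis by (simp add: power_mult_distrib sq_nonneg)
qed



definition aliceU :: "nat \<Rightarrow> nat \<Rightarrow> complex mat \<Rightarrow> complex vec \<Rightarrow> nat \<times> nat \<Rightarrow> complex" where
  "aliceU m n A psi = (\<lambda>(k,j). \<Sum>i<m. A $$ (k,i) * psi $ (i*n+j))"

definition bobW :: "nat \<Rightarrow> complex mat \<Rightarrow> complex vec \<Rightarrow> nat \<times> nat \<Rightarrow> complex" where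
  "bobW n B psi = (\<lambda>(k,j). \<Sum>l<n. B $$ (j,l) * psi $ (k*n+l))"

lemma expect_kron:
  assumes A: "A \<in> carrier_mat m m" and hA: "herm A m" and B: "B \<in> carrier_mat n n"
    and psi: "psi \<in> carrier_vec (m*n)"
  shows "expect psi (kron A B) = (\<Sum>p\<in>{..<m}\<times>{..<n}. cnj (aliceU m n A psi p) * bobW n B psi p)"
proof -
  have he: "\<And>i j. i < m \<Longrightarrow> j < m \<Longrightarrow> cnj (A $$ (j,i)) = A $$ (i,j)" using hA unfolding herm_def by blast
  define K where "K = kron A B"
  have Kc: "K \<in> carrier_mat (m*n) (m*n)" unfolding K_def kron_def using A B by auto
  have Ke: "K $$ (i*n+j, k*n+l) = A $$ (i,k) * B $$ (j,l)" if "i < m" "j < n" "k < m" "l < n" for i j k l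
    unfolding K_def kron_def using A B that idx_bound divmod_aux by auto
  define W where "W = bobW n B psi"
  have Kv: "(K *\<^sub>v psi) $ (i*n+j) = (\<Sum>k<m. A $$ (i,k) * W (k,j))" if "i < m" "j < n" for i j
  proof -
    have "(K *\<^sub>v psi) $ (i*n+j) = (\<Sum>s<m*n. K $$ (i*n+j, s) * psi $ s)"
      by (rule mv_index[OF Kc psi idx_bound[OF that]])
    also have "\<dots> = (\<Sum>k<m. \<Sum>l<n. K $$ (i*n+j, k*n+l) * psi $ (k*n+l))" by (rule sum_split)
    also have "\<dots> = (\<Sum>k<m. \<Sum>l<n. A $$ (i,k) * (B $$ (j,l) * psi $ (k*n+l)))"
      using that by (intro sum.cong refl) (simp add: Ke mult.assoc)
    also have "\<dots> = (\<Sum>k<m. A $$ (i,k) * W (k,j))"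
      unfolding W_def bobW_def by (simp add: sum_distrib_left)
    finally show ?thesis .
  qed
  have dpsi: "dim_vec psi = m * n" using psi by simp
  have "expect psi (kron A B) = (\<Sum>r<m*n. cnj (psi $ r) * (K *\<^sub>v psi) $ r)"
    unfolding expect_def cinner_def K_def dpsi ..
  also have "\<dots> = (\<Sum>i<m. \<Sum>j<n. cnj (psi $ (i*n+j)) * (K *\<^sub>v psi) $ (i*n+j))" by (rule sum_split)
  also have "\<dots> = (\<Sum>i<m. \<Sum>j<n. \<Sum>k<m. A $$ (i,k) * cnj (psi $ (i*n+j)) * W (k,j))"
    by (intro sum.cong refl) (simp add: Kv sum_distrib_left mult.assoc mult.left_commute)
  also have "\<dots> = (\<Sum>i<m. \<Sum>k<m. \<Sum>j<n. A $$ (i,k) * cnj (psi $ (i*n+j)) * W (k,j))"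
    by (rule sum.cong[OF refl], rule sum.swap)
  also have "\<dots> = (\<Sum>k<m. \<Sum>i<m. \<Sum>j<n. A $$ (i,k) * cnj (psi $ (i*n+j)) * W (k,j))"
    by (rule sum.swap)
  also have "\<dots> = (\<Sum>k<m. \<Sum>j<n. \<Sum>i<m. A $$ (i,k) * cnj (psi $ (i*n+j)) * W (k,j))"
    by (rule sum.cong[OF refl], rule sum.swap)
  also have "\<dots> = (\<Sum>k<m. \<Sum>j<n. cnj (aliceU m n A psi (k,j)) * W (k,j))"
  proof (intro sum.cong refl)
    fix k j assume k: "k \<in> {..<m}" and j: "j \<in> {..<n}"
    have "cnj (aliceU m n A psi (k,j)) = (\<Sum>i<m. A $$ (i,k) * cnj (psi $ (i*n+j)))"
      unfolding aliceU_def using k he by (simp add: cnj_sum)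
    then show "(\<Sum>i<m. A $$ (i,k) * cnj (psi $ (i*n+j)) * W (k,j)) = cnj (aliceU m n A psi (k,j)) * W (k,j)"
      by (simp add: sum_distrib_right)
  qed
  also have "\<dots> = (\<Sum>p\<in>{..<m}\<times>{..<n}. cnj (aliceU m n A psi p) * bobW n B psi p)"
    unfolding W_def by (simp add: sum.cartesian_product)
  finally show ?thesis .
qed

lemma aliceU_norm:
  assumes A: "binary_obs m A" and psi: "psi \<in> carrier_vec (m*n)"
  shows "sq ({..<m}\<times>{..<n}) (aliceU m n A psi) \<le> sq {..<m*n} (\<lambda>r. psi $ r)"
proof -
  have Ac: "A \<in> carrier_mat m m" using binary_obs_carrier[OF A] .
  define col where "col j = vec m (\<lambda>i. psi $ (i*n+j))" for j
  have colc: "col j \<in> carrier_vec m" for j unfolding col_def by simp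
  have Ucol: "aliceU m n A psi (k,j) = (A *\<^sub>v col j) $ k" if "k < m" for k j
  proof -
    have "(A *\<^sub>v col j) $ k = (\<Sum>i<m. A $$ (k,i) * col j $ i)" by (rule mv_index[OF Ac colc that])
    also have "\<dots> = (\<Sum>i<m. A $$ (k,i) * psi $ (i*n+j))" unfolding col_def by (intro sum.cong refl) auto
    finally show ?thesis unfolding aliceU_def by simp
  qed
  have "sq ({..<m}\<times>{..<n}) (aliceU m n A psi) = (\<Sum>k<m. \<Sum>j<n. (cmod (aliceU m n A psi (k,j)))^2)"
    by (rule sq_prod)
  also have "\<dots> = (\<Sum>j<n. \<Sum>k<m. (cmod (aliceU m n A psi (k,j)))^2)" by (rule sum.swap)
  also have "\<dots> = (\<Sum>j<n. sq {..<m} (\<lambda>k. (A *\<^sub>v col j) $ k))"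
    unfolding sq_def by (intro sum.cong refl) (simp add: Ucol)
  also have "\<dots> \<le> (\<Sum>j<n. sq {..<m} (\<lambda>i. col j $ i))"
    by (intro sum_mono obs_bound_sq[OF A colc])
  also have "\<dots> = (\<Sum>j<n. \<Sum>i<m. (cmod (psi $ (i*n+j)))^2)"
    unfolding sq_def col_def by (intro sum.cong refl) simp
  also have "\<dots> = (\<Sum>i<m. \<Sum>j<n. (cmod (psi $ (i*n+j)))^2)" by (rule sum.swap)
  also have "\<dots> = sq {..<m*n} (\<lambda>r. psi $ r)" unfolding sq_def by (rule sum_split[symmetric])
  finally show ?thesis .
qed

lemma bobW_norm:
  assumes B: "binary_obs n B" and psi: "psi \<in> carrier_vec (m*n)"
  shows "sq ({..<m}\<times>{..<n}) (bobW n B psi) \<le> sq {..<m*n} (\<lambda>r. psi $ r)"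
proof -
  have Bc: "B \<in> carrier_mat n n" using binary_obs_carrier[OF B] .
  define row where "row k = vec n (\<lambda>l. psi $ (k*n+l))" for k
  have rowc: "row k \<in> carrier_vec n" for k unfolding row_def by simp
  have Wrow: "bobW n B psi (k,j) = (B *\<^sub>v row k) $ j" if "j < n" for k j
  proof -
    have "(B *\<^sub>v row k) $ j = (\<Sum>l<n. B $$ (j,l) * row k $ l)" by (rule mv_index[OF Bc rowc that])
    also have "\<dots> = (\<Sum>l<n. B $$ (j,l) * psi $ (k*n+l))" unfolding row_def by (intro sum.cong refl) auto
    finally show ?thesis unfolding bobW_def by simp
  qed
  have "sq ({..<m}\<times>{..<n}) (bobW n B psi) = (\<Sum>k<m. \<Sum>j<n. (cmod (bobW n B psi (k,j)))^2)"
    by (rule sq_prod)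
  also have "\<dots> = (\<Sum>k<m. sq {..<n} (\<lambda>j. (B *\<^sub>v row k) $ j))"
    unfolding sq_def by (intro sum.cong refl) (simp add: Wrow)
  also have "\<dots> \<le> (\<Sum>k<m. sq {..<n} (\<lambda>l. row k $ l))"
    by (intro sum_mono obs_bound_sq[OF B rowc])
  also have "\<dots> = (\<Sum>k<m. \<Sum>l<n. (cmod (psi $ (k*n+l)))^2)"
    unfolding sq_def row_def by (intro sum.cong refl) simp
  also have "\<dots> = sq {..<m*n} (\<lambda>r. psi $ r)" unfolding sq_def by (rule sum_split[symmetric])
  finally show ?thesis .
qed

lemma bobW_diff:
  assumes B0: "binary_obs n B0" and B1: "binary_obs n B1" and op: "opnorm (B0 - B1) \<le> 2 * k" and k: "0 \<le> k"
    and psi: "psi \<in> carrier_vec (m*n)"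
  shows "sq ({..<m}\<times>{..<n}) (\<lambda>p. bobW n B0 psi p - bobW n B1 psi p) \<le> 4 * k^2 * sq {..<m*n} (\<lambda>r. psi $ r)"
proof -
  have Bc0: "B0 \<in> carrier_mat n n" using binary_obs_carrier[OF B0] .
  have Bc1: "B1 \<in> carrier_mat n n" using binary_obs_carrier[OF B1] .
  define row where "row k = vec n (\<lambda>l. psi $ (k*n+l))" for k
  have rowc: "row k \<in> carrier_vec n" for k unfolding row_def by simp
  have Wrow0: "bobW n B0 psi (k,j) = (B0 *\<^sub>v row k) $ j" if "j < n" for k j
  proof -
    have "(B0 *\<^sub>v row k) $ j = (\<Sum>l<n. B0 $$ (j,l) * row k $ l)" by (rule mv_index[OF Bc0 rowc that])
    also have "\<dots> = (\<Sum>l<n. B0 $$ (j,l) * psi $ (k*n+l))" unfolding row_def by (intro sum.cong refl) auto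
    finally show ?thesis unfolding bobW_def by simp
  qed
  have Wrow1: "bobW n B1 psi (k,j) = (B1 *\<^sub>v row k) $ j" if "j < n" for k j
  proof -
    have "(B1 *\<^sub>v row k) $ j = (\<Sum>l<n. B1 $$ (j,l) * row k $ l)" by (rule mv_index[OF Bc1 rowc that])
    also have "\<dots> = (\<Sum>l<n. B1 $$ (j,l) * psi $ (k*n+l))" unfolding row_def by (intro sum.cong refl) auto
    finally show ?thesis unfolding bobW_def by simp
  qed
  have "sq ({..<m}\<times>{..<n}) (\<lambda>p. bobW n B0 psi p - bobW n B1 psi p)
      = (\<Sum>k'<m. \<Sum>j<n. (cmod (bobW n B0 psi (k',j) - bobW n B1 psi (k',j)))^2)"
    by (rule sq_prod)
  also have "\<dots> = (\<Sum>k'<m. sq {..<n} (\<lambda>j. (B0 *\<^sub>v row k') $ j - (B1 *\<^sub>v row k') $ j))"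
    unfolding sq_def by (intro sum.cong refl) (simp add: Wrow0 Wrow1)
  also have "\<dots> \<le> (\<Sum>k'<m. 4 * k^2 * sq {..<n} (\<lambda>l. row k' $ l))"
    by (intro sum_mono diff_bound[OF B0 B1 op k rowc])
  also have "\<dots> = 4 * k^2 * (\<Sum>k'<m. \<Sum>l<n. (cmod (psi $ (k'*n+l)))^2)"
    unfolding sq_def row_def by (simp add: sum_distrib_left)
  also have "\<dots> = 4 * k^2 * sq {..<m*n} (\<lambda>r. psi $ r)" unfolding sq_def
    using sum_split[of "\<lambda>r. (cmod (psi $ r))^2" m n] by simp
  finally show ?thesis .
qed



lemma re_bound:
  assumes "sq I u \<le> 1"
  shows "Re (\<Sum>p\<in>I. cnj (u p) * g p) \<le> sqrt (sq I g)"
proof -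
  have "Re (\<Sum>p\<in>I. cnj (u p) * g p) \<le> sqrt (sq I u) * sqrt (sq I g)" by (rule cs_sum)
  also have "\<dots> \<le> 1 * sqrt (sq I g)"
    by (rule mult_right_mono) (use assms sq_nonneg in auto)
  finally show ?thesis by simp
qed

lemma score_bound:
  assumes cfg: "chsh_config k m n psi A0 A1 B00 B01 B10 B11" and k0: "0 \<le> k"
  shows "chsh_score psi A0 A1 B00 B01 B10 B11 \<le> (if k \<le> 1 / sqrt 2 then 2 * sqrt 2 * (k + sqrt (1 - k^2)) else 4)"
proof -
  have psi: "psi \<in> carrier_vec (m*n)" and vn: "vnorm psi = 1"
    and oA0: "binary_obs m A0" and oA1: "binary_obs m A1"
    and o00: "binary_obs n B00" and o01: "binary_obs n B01" and o10: "binary_obs n B10" and o11: "binary_obs n B11"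
    and op0: "opnorm (B00 - B01) \<le> 2 * k" and op1: "opnorm (B10 - B11) \<le> 2 * k"
    using cfg unfolding chsh_config_def by auto
  have sqpsi: "sq {..<m*n} (\<lambda>r. psi $ r) = 1"
    using vn psi unfolding vnorm_sq by simp
  define I where "I = {..<m}\<times>{..<n}"
  define U0 where "U0 = aliceU m n A0 psi"
  define U1 where "U1 = aliceU m n A1 psi"
  define a where "a = bobW n B00 psi"
  define b where "b = bobW n B10 psi"
  define c where "c = bobW n B01 psi"
  define d where "d = bobW n B11 psi"
  have cA0: "A0 \<in> carrier_mat m m" and hA0: "herm A0 m" using oA0 binary_obs_carrier binary_obs_herm by auto
  have cA1: "A1 \<in> carrier_mat m m" and hA1: "herm A1 m" using oA1 binary_obs_carrier binary_obs_herm by auto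
  have c00: "B00 \<in> carrier_mat n n" and c01: "B01 \<in> carrier_mat n n" and c10: "B10 \<in> carrier_mat n n"
    and c11: "B11 \<in> carrier_mat n n" using o00 o01 o10 o11 binary_obs_carrier by auto
  have e1: "expect psi (kron A0 B00) = (\<Sum>p\<in>I. cnj (U0 p) * a p)"
    unfolding I_def U0_def a_def by (rule expect_kron[OF cA0 hA0 c00 psi])
  have e2: "expect psi (kron A0 B10) = (\<Sum>p\<in>I. cnj (U0 p) * b p)"
    unfolding I_def U0_def b_def by (rule expect_kron[OF cA0 hA0 c10 psi])
  have e3: "expect psi (kron A1 B01) = (\<Sum>p\<in>I. cnj (U1 p) * c p)"
    unfolding I_def U1_def c_def by (rule expect_kron[OF cA1 hA1 c01 psi])
  have e4: "expect psi (kron A1 B11) = (\<Sum>p\<in>I. cnj (U1 p) * d p)"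
    unfolding I_def U1_def d_def by (rule expect_kron[OF cA1 hA1 c11 psi])
  have sc: "chsh_score psi A0 A1 B00 B01 B10 B11 =
      Re (\<Sum>p\<in>I. cnj (U0 p) * (a p + b p)) + Re (\<Sum>p\<in>I. cnj (U1 p) * (c p - d p))"
  proof -
    have s1: "(\<Sum>p\<in>I. cnj (U0 p) * a p) + (\<Sum>p\<in>I. cnj (U0 p) * b p) = (\<Sum>p\<in>I. cnj (U0 p) * (a p + b p))"
      by (simp add: sum.distrib distrib_left)
    have s2: "(\<Sum>p\<in>I. cnj (U1 p) * c p) - (\<Sum>p\<in>I. cnj (U1 p) * d p) = (\<Sum>p\<in>I. cnj (U1 p) * (c p - d p))"
      by (simp add: sum_subtractf right_diff_distrib)
    have g: "Re (X1 + X2 + X3 - X4) = Re (X1 + X2) + Re (X3 - X4)" for X1 X2 X3 X4 :: complex by simp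
    show ?thesis unfolding chsh_score_def e1 e2 e3 e4 g unfolding s1 s2 ..
  qed
  have nU0: "sq I U0 \<le> 1" unfolding I_def U0_def using aliceU_norm[OF oA0 psi] sqpsi by simp
  have nU1: "sq I U1 \<le> 1" unfolding I_def U1_def using aliceU_norm[OF oA1 psi] sqpsi by simp
  have na: "sq I a \<le> 1" unfolding I_def a_def using bobW_norm[OF o00 psi] sqpsi by simp
  have nb: "sq I b \<le> 1" unfolding I_def b_def using bobW_norm[OF o10 psi] sqpsi by simp
  have nc: "sq I c \<le> 1" unfolding I_def c_def using bobW_norm[OF o01 psi] sqpsi by simp
  have nd: "sq I d \<le> 1" unfolding I_def d_def using bobW_norm[OF o11 psi] sqpsi by simp
  have dac: "sq I (\<lambda>p. a p - c p) \<le> 4 * k^2"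
    unfolding I_def a_def c_def using bobW_diff[OF o00 o01 op0 k0 psi] sqpsi by simp
  have dbd: "sq I (\<lambda>p. b p - d p) \<le> 4 * k^2"
    unfolding I_def b_def d_def using bobW_diff[OF o10 o11 op1 k0 psi] sqpsi by simp
  have S: "chsh_score psi A0 A1 B00 B01 B10 B11 \<le> sqrt (sq I (\<lambda>p. a p + b p)) + sqrt (sq I (\<lambda>p. c p - d p))"
    unfolding sc by (intro add_mono re_bound nU0 nU1)
  have fin: "finite I" unfolding I_def by simp
  show ?thesis
  proof (cases "k \<le> 1 / sqrt 2")
    case True
    have "sqrt (sq I (\<lambda>p. a p + b p)) + sqrt (sq I (\<lambda>p. c p - d p))
        \<le> sqrt (2 * (sq I (\<lambda>p. a p + b p) + sq I (\<lambda>p. c p - d p)))"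
      by (rule sqrt_sum_le) (simp_all add: sq_nonneg)
    also have "\<dots> \<le> sqrt (2 * (4 * (k + sqrt (1 - k^2))^2))"
      using relax_sq[OF fin k0 True na nb nc nd dac dbd] by simp
    also have "\<dots> = 2 * sqrt 2 * (k + sqrt (1 - k^2))"
    proof -
      have "k^2 \<le> 1" using True k0
      proof -
        have "1 / sqrt 2 \<le> (1::real)" by (simp add: divide_le_eq)
        then have "k \<le> 1" using True by linarith
        then show ?thesis using k0 by (simp add: power_le_one)
      qed
      then have p: "0 \<le> k + sqrt (1 - k^2)" using k0 by simp
      have "2 * (4 * (k + sqrt (1 - k^2))^2) = (2 * sqrt 2 * (k + sqrt (1 - k^2)))^2"
        by (simp add: power_mult_distrib)
      then show ?thesis using p by simp
    qed
    finally show ?thesis using S True by simp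
  next
    case False
    have "sqrt (sq I (\<lambda>p. a p + b p)) \<le> sqrt (sq I a) + sqrt (sq I b)" by (rule sq_triangle)
    also have "\<dots> \<le> 1 + 1" using na nb by (intro add_mono) simp_all
    finally have 1: "sqrt (sq I (\<lambda>p. a p + b p)) \<le> 2" by simp
    have "sqrt (sq I (\<lambda>p. c p - d p)) \<le> sqrt (sq I c) + sqrt (sq I d)" by (rule sq_triangle_minus)
    also have "\<dots> \<le> 1 + 1" using nc nd by (intro add_mono) simp_all
    finally have 2: "sqrt (sq I (\<lambda>p. c p - d p)) \<le> 2" by simp
    show ?thesis using S 1 2 False by simp
  qed
qed



definition pm :: "real \<Rightarrow> real \<Rightarrow> complex mat" where
  "pm a b = mat_of_rows_list 2 [[complex_of_real b, complex_of_real a], [complex_of_real a, - complex_of_real b]]"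

lemma sum2: "(\<Sum>i<(2::nat). f i) = f 0 + f 1"
  by (simp add: eval_nat_numeral)

lemma sum4: "(\<Sum>i<(4::nat). f i) = f 0 + f 1 + f 2 + f 3"
  by (simp add: eval_nat_numeral)

lemma pm_dim[simp]: "dim_row (pm a b) = 2" "dim_col (pm a b) = 2"
  unfolding pm_def mat_of_rows_list_def by simp_all

lemma pm_carrier: "pm a b \<in> carrier_mat 2 2"
  unfolding carrier_mat_def by simp

lemma pm_idx[simp]:
  "pm a b $$ (0,0) = b" "pm a b $$ (0,1) = a" "pm a b $$ (1,0) = a" "pm a b $$ (1,1) = - b"
  "pm a b $$ (0,Suc 0) = a" "pm a b $$ (Suc 0,0) = a" "pm a b $$ (Suc 0,Suc 0) = - b"
  unfolding pm_def mat_of_rows_list_def by simp_all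

lemma sigma_x_pm: "sigma_x = pm 1 0"
  unfolding sigma_x_def pm_def by simp

lemma sigma_z_pm: "sigma_z = pm 0 1"
  unfolding sigma_z_def pm_def by simp

lemma less2: "i < (2::nat) \<longleftrightarrow> i = 0 \<or> i = 1" by auto

lemma pm_eqI:
  assumes "M \<in> carrier_mat 2 2" "M $$ (0,0) = b" "M $$ (0,1) = a" "M $$ (1,0) = a" "M $$ (1,1) = - b"
  shows "M = pm a b"
  by (rule eq_matI) (use assms pm_carrier in \<open>auto simp: less2 pm_idx\<close>)

lemma neg_sigma_x_pm: "- sigma_x = pm (-1) 0"
  by (rule pm_eqI) (simp_all add: sigma_x_pm pm_idx pm_carrier)

lemma pm_lin: "complex_of_real x \<cdot>\<^sub>m sigma_x + complex_of_real y \<cdot>\<^sub>m sigma_z = pm x y"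
  by (rule pm_eqI) (simp_all add: sigma_x_pm sigma_z_pm pm_idx pm_carrier)

lemma pm_sub: "pm a b - pm c d = pm (a - c) (b - d)"
  by (rule pm_eqI) (simp_all add: pm_idx pm_carrier minus_carrier_mat)

lemma pm_mv:
  assumes v: "v \<in> carrier_vec 2"
  shows "(pm a b *\<^sub>v v) $ 0 = b * v $ 0 + a * v $ 1" "(pm a b *\<^sub>v v) $ 1 = a * v $ 0 - b * v $ 1"
  using mv_index[OF pm_carrier v, of 0 a b] mv_index[OF pm_carrier v, of 1 a b]
  by (simp_all add: sum2 pm_idx)

lemma pm_norm:
  assumes v: "v \<in> carrier_vec 2"
  shows "vnorm (pm a b *\<^sub>v v) = sqrt (a^2 + b^2) * vnorm v"
proof -
  have d: "dim_vec (pm a b *\<^sub>v v) = 2" using pm_carrier[of a b] by simp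
  have dv: "dim_vec v = 2" using v by simp
  have "(cmod (b * v $ 0 + a * v $ 1))^2 + (cmod (a * v $ 0 - b * v $ 1))^2
      = (a^2 + b^2) * ((cmod (v $ 0))^2 + (cmod (v $ 1))^2)"
    unfolding cmod_power2 by (simp add: power2_eq_square algebra_simps)
  then show ?thesis unfolding vnorm_def d dv sum2 pm_mv[OF v]
    by (simp add: real_sqrt_mult)
qed

lemma pm_opnorm: "opnorm (pm a b) \<le> sqrt (a^2 + b^2)"
proof -
  define e where "e = vec 2 (\<lambda>i. if i = 0 then (1::complex) else 0)"
  have ec: "e \<in> carrier_vec 2" unfolding e_def by simp
  have en: "vnorm e = 1" unfolding vnorm_def e_def by (simp add: sum2)
  have dc: "dim_col (pm a b) = 2" using pm_carrier[of a b] by simp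
  show ?thesis unfolding opnorm_def dc
  proof (rule cSup_least)
    show "{vnorm (pm a b *\<^sub>v v) |v. v \<in> carrier_vec 2 \<and> vnorm v = 1} \<noteq> {}" using ec en by blast
  next
    fix x assume "x \<in> {vnorm (pm a b *\<^sub>v v) |v. v \<in> carrier_vec 2 \<and> vnorm v = 1}"
    then obtain v where "v \<in> carrier_vec 2" "vnorm v = 1" "x = vnorm (pm a b *\<^sub>v v)" by blast
    then show "x \<le> sqrt (a^2 + b^2)" using pm_norm by simp
  qed
qed

definition hm :: "real \<Rightarrow> real \<Rightarrow> real \<Rightarrow> complex mat" where
  "hm x y z = mat_of_rows_list 2 [[complex_of_real x, complex_of_real y], [complex_of_real y, complex_of_real z]]"

lemma hm_dim[simp]: "dim_row (hm x y z) = 2" "dim_col (hm x y z) = 2"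
  unfolding hm_def mat_of_rows_list_def by simp_all

lemma hm_carrier: "hm x y z \<in> carrier_mat 2 2"
  unfolding carrier_mat_def by simp

lemma hm_idx[simp]:
  "hm x y z $$ (0,0) = x" "hm x y z $$ (0,1) = y" "hm x y z $$ (1,0) = y" "hm x y z $$ (1,1) = z"
  "hm x y z $$ (0,Suc 0) = y" "hm x y z $$ (Suc 0,0) = y" "hm x y z $$ (Suc 0,Suc 0) = z"
  unfolding hm_def mat_of_rows_list_def by simp_all

lemma quad_nonneg:
  fixes x y z a b c d :: real
  assumes "0 \<le> x" "0 \<le> z" "y^2 \<le> x * z"
  shows "0 \<le> x * (a^2 + b^2) + z * (c^2 + d^2) + 2 * y * (a * c + b * d)"
proof (cases "x = 0")
  case True
  then have "y = 0" using assms by simp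
  then show ?thesis using True assms by simp
next
  case False
  then have xp: "0 < x" using assms by simp
  have "x * (x * (a^2 + b^2) + z * (c^2 + d^2) + 2 * y * (a * c + b * d))
     = (x*a + y*c)^2 + (x*b + y*d)^2 + (x*z - y^2) * (c^2 + d^2)"
    by (simp add: power2_eq_square algebra_simps)
  also have "\<dots> \<ge> 0" using assms by simp
  finally show ?thesis using xp by (simp add: zero_le_mult_iff)
qed

lemma hm_psd:
  assumes "0 \<le> x" "0 \<le> z" "y^2 \<le> x * z"
  shows "psd 2 (hm x y z)"
  unfolding psd_def
proof (intro conjI ballI hm_carrier)
  fix v :: "complex vec" assume v: "v \<in> carrier_vec 2"
  have dv: "dim_vec v = 2" using v by simp
  have e: "cinner v (hm x y z *\<^sub>v v) = cnj (v $ 0) * (x * v $ 0 + y * v $ 1) + cnj (v $ 1) * (y * v $ 0 + z * v $ 1)"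
    unfolding cinner_def dv sum2
    using mv_index[OF hm_carrier v, of 0 x y z] mv_index[OF hm_carrier v, of 1 x y z]
    by (simp add: sum2 hm_idx)
  show "cinner v (hm x y z *\<^sub>v v) \<in> \<real>" unfolding e complex_is_Real_iff by (simp add: algebra_simps)
  show "0 \<le> Re (cinner v (hm x y z *\<^sub>v v))" unfolding e
    using quad_nonneg[OF assms, of "Re (v $ 0)" "Im (v $ 0)" "Re (v $ 1)" "Im (v $ 1)"]
    by (simp add: power2_eq_square algebra_simps)
qed

lemma hm_eqI:
  assumes "M \<in> carrier_mat 2 2" "M $$ (0,0) = x" "M $$ (0,1) = y" "M $$ (1,0) = y" "M $$ (1,1) = z"
  shows "M = hm x y z"
  by (rule eq_matI) (use assms hm_carrier in \<open>auto simp: less2\<close>)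

lemma hm_add: "hm x y z + hm x' y' z' = hm (x + x') (y + y') (z + z')"
  by (rule hm_eqI) (simp_all add: hm_carrier)

lemma hm_sub: "hm x y z - hm x' y' z' = hm (x - x') (y - y') (z - z')"
  by (rule hm_eqI) (simp_all add: hm_carrier minus_carrier_mat)

lemma hm_one: "1\<^sub>m 2 = hm 1 0 1"
  by (rule hm_eqI) simp_all

lemma pm_hm: "pm a b = hm b a (- b)"
  by (rule hm_eqI) (simp_all add: pm_carrier)

lemma pm_binary:
  assumes ab: "a^2 + b^2 = 1"
  shows "binary_obs 2 (pm a b)"
  unfolding binary_obs_def
proof (intro exI conjI)
  have "0 \<le> a^2" by simp
  then have "b^2 \<le> 1" using ab by linarith
  then have "\<bar>b\<bar> \<le> 1" using abs_square_le_1 by blast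
  then have b1: "b \<le> 1" and b2: "-1 \<le> b" by linarith+
  have ha: "a^2 = 1 - b^2" using ab by linarith
  have sq1: "(a/2)^2 \<le> (1 + b)/2 * ((1 - b)/2)"
    unfolding power_divide ha by (simp add: power2_eq_square algebra_simps)
  have sq2: "(-a/2)^2 \<le> (1 - b)/2 * ((1 + b)/2)"
    unfolding power_divide power2_minus ha by (simp add: power2_eq_square algebra_simps)
  show "psd 2 (hm ((1 + b)/2) (a/2) ((1 - b)/2))"
    by (rule hm_psd) (use b1 b2 sq1 in simp_all)
  show "psd 2 (hm ((1 - b)/2) (-a/2) ((1 + b)/2))"
    by (rule hm_psd) (use b1 b2 sq2 in simp_all)
  have r1: "(1 + b)/2 + (1 - b)/2 = (1::real)" by (simp add: field_simps)
  have r2: "a/2 + -a/2 = (0::real)" by simp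
  show "hm ((1 + b)/2) (a/2) ((1 - b)/2) + hm ((1 - b)/2) (-a/2) ((1 + b)/2) = 1\<^sub>m 2"
    unfolding hm_add hm_one by (simp only: r1 r2 add.commute[of "(1 - b)/2"])
  have r3: "(1 + b)/2 - (1 - b)/2 = b" by (simp add: field_simps)
  have r4: "a/2 - -a/2 = a" by simp
  have r5: "(1 - b)/2 - (1 + b)/2 = -b" by (simp add: field_simps)
  show "pm a b = hm ((1 + b)/2) (a/2) ((1 - b)/2) - hm ((1 - b)/2) (-a/2) ((1 + b)/2)"
    unfolding hm_sub pm_hm by (simp only: r3 r4 r5)
qed



lemma phi_idx[simp]: "phi_plus $ 0 = 1 / sqrt 2" "phi_plus $ 1 = 0" "phi_plus $ 2 = 0" "phi_plus $ 3 = 1 / sqrt 2"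
  "phi_plus $ Suc 0 = 0" "phi_plus $ Suc (Suc 0) = 0" "phi_plus $ Suc (Suc (Suc 0)) = 1 / sqrt 2"
  unfolding phi_plus_def vec_of_list_index by simp_all

lemma phi_dim[simp]: "dim_vec phi_plus = 4"
  unfolding phi_plus_def by simp

lemma phi_carrier: "phi_plus \<in> carrier_vec (2*2)"
  unfolding carrier_vec_def by simp

lemma phi_norm: "vnorm phi_plus = 1"
  unfolding vnorm_def phi_dim sum4 by (simp add: power_divide norm_divide)

lemma pm_herm: "herm (pm a b) 2"
  unfolding herm_def using pm_carrier by (auto simp: less2)

lemma expect_pm: "expect phi_plus (kron (pm a1 b1) (pm a2 b2)) = complex_of_real (a1*a2 + b1*b2)"
proof -
  have "expect phi_plus (kron (pm a1 b1) (pm a2 b2)) =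
     (\<Sum>p\<in>{..<2}\<times>{..<2}. cnj (aliceU 2 2 (pm a1 b1) phi_plus p) * bobW 2 (pm a2 b2) phi_plus p)"
    by (rule expect_kron[OF pm_carrier pm_herm pm_carrier phi_carrier])
  also have "\<dots> = (\<Sum>k<2. \<Sum>j<2. cnj (aliceU 2 2 (pm a1 b1) phi_plus (k,j)) * bobW 2 (pm a2 b2) phi_plus (k,j))"
    by (simp add: sum.cartesian_product)
  also have "\<dots> = complex_of_real (a1*a2 + b1*b2)"
  proof -
    have s2: "complex_of_real (sqrt 2) * complex_of_real (sqrt 2) = 2"
      unfolding of_real_mult[symmetric] by simp
    show ?thesis unfolding sum2 aliceU_def bobW_def by (simp add: algebra_simps power_divide) (simp add: s2)
  qed
  finally show ?thesis .
qed



lemma div_s2: "x^2 + y^2 = 2 \<Longrightarrow> (x / sqrt 2)^2 + (y / sqrt 2)^2 = 1"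
  by (simp add: power_divide add_divide_distrib[symmetric])

lemma diff_s2: "(x1 / sqrt 2 - x2 / sqrt 2)^2 + (y1 / sqrt 2 - y2 / sqrt 2)^2 = ((x1 - x2)^2 + (y1 - y2)^2) / 2"
  by (simp add: diff_divide_distrib[symmetric] power_divide add_divide_distrib)

lemma opnorm_pm_diff: "opnorm (pm a b - pm c d) \<le> sqrt ((a - c)^2 + (b - d)^2)"
  unfolding pm_sub by (rule pm_opnorm)

lemma four_div_s2: "4 / sqrt 2 = 2 * sqrt 2"
proof -
  have "sqrt 2 * sqrt 2 = (2::real)" by simp
  then show ?thesis by (simp add: field_simps)
qed

theorem mainTheorem10:
  fixes \<kappa> :: real
  assumes "0 \<le> \<kappa>" and "\<kappa> < 1"
  defines "c \<equiv> sqrt (1 - \<kappa>\<^sup>2)"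
  shows "S_q \<kappa> = (if \<kappa> \<le> 1 / sqrt 2 then 2 * sqrt 2 * (\<kappa> + c) else 4)
    \<and> (\<forall>s \<in> chsh_vals \<kappa>. s \<le> S_q \<kappa>)
    \<and> (\<kappa> \<le> 1 / sqrt 2 \<longrightarrow>
        (let B00 = complex_of_real ((- \<kappa> + c) / sqrt 2) \<cdot>\<^sub>m sigma_x
                   + complex_of_real ((\<kappa> + c) / sqrt 2) \<cdot>\<^sub>m sigma_z;
             B01 = complex_of_real ((\<kappa> + c) / sqrt 2) \<cdot>\<^sub>m sigma_x
                   + complex_of_real ((- \<kappa> + c) / sqrt 2) \<cdot>\<^sub>m sigma_z;
             B10 = complex_of_real ((\<kappa> - c) / sqrt 2) \<cdot>\<^sub>m sigma_x
                   + complex_of_real ((\<kappa> + c) / sqrt 2) \<cdot>\<^sub>m sigma_z;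
             B11 = complex_of_real ((- \<kappa> - c) / sqrt 2) \<cdot>\<^sub>m sigma_x
                   + complex_of_real ((- \<kappa> + c) / sqrt 2) \<cdot>\<^sub>m sigma_z
         in chsh_config \<kappa> 2 2 phi_plus sigma_z sigma_x B00 B01 B10 B11
            \<and> chsh_score phi_plus sigma_z sigma_x B00 B01 B10 B11 = S_q \<kappa>))
    \<and> (1 / sqrt 2 \<le> \<kappa> \<longrightarrow>
         chsh_config \<kappa> 2 2 phi_plus sigma_z sigma_x sigma_z sigma_x sigma_z (- sigma_x)
       \<and> chsh_score phi_plus sigma_z sigma_x sigma_z sigma_x sigma_z (- sigma_x) = S_q \<kappa>)"
proof -
  have k0: "0 \<le> \<kappa>" and k1: "\<kappa> < 1" using assms by auto
  have kk: "\<kappa>^2 \<le> 1" using power_le_one[of \<kappa> 2] k0 k1 by simp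
  have cs: "c^2 = 1 - \<kappa>^2" unfolding c_def by (rule real_sqrt_pow2) (use kk in linarith)
  have c0: "0 \<le> c" unfolding c_def by (rule real_sqrt_ge_zero) (use kk in linarith)
  define V where "V = (if \<kappa> \<le> 1 / sqrt 2 then 2 * sqrt 2 * (\<kappa> + c) else 4)"
  have ub: "\<forall>s\<in>chsh_vals \<kappa>. s \<le> V"
    unfolding chsh_vals_def V_def c_def using score_bound[OF _ k0] by auto
  have Vle4: "2 * sqrt 2 * (\<kappa> + c) \<le> 4"
  proof -
    have "0 \<le> (\<kappa> - c)^2" by simp
    then have "(\<kappa> + c)^2 \<le> 2" using cs by (simp add: power2_eq_square algebra_simps)
    then have "\<kappa> + c \<le> sqrt 2" by (rule real_le_rsqrt)
    then have "sqrt 2 * (\<kappa> + c) \<le> sqrt 2 * sqrt 2" by (intro mult_left_mono) auto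
    then have "sqrt 2 * (\<kappa> + c) \<le> 2" by simp
    then show ?thesis by linarith
  qed
  define a00 where "a00 = (- \<kappa> + c) / sqrt 2"
  define b00 where "b00 = (\<kappa> + c) / sqrt 2"
  define a01 where "a01 = (\<kappa> + c) / sqrt 2"
  define b01 where "b01 = (- \<kappa> + c) / sqrt 2"
  define a10 where "a10 = (\<kappa> - c) / sqrt 2"
  define b10 where "b10 = (\<kappa> + c) / sqrt 2"
  define a11 where "a11 = (- \<kappa> - c) / sqrt 2"
  define b11 where "b11 = (- \<kappa> + c) / sqrt 2"
  have two: "(- \<kappa> + c)^2 + (\<kappa> + c)^2 = 2" "(\<kappa> + c)^2 + (- \<kappa> + c)^2 = 2"
    "(\<kappa> - c)^2 + (\<kappa> + c)^2 = 2" "(- \<kappa> - c)^2 + (- \<kappa> + c)^2 = 2"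
    using cs by (simp_all add: power2_eq_square algebra_simps)
  have bin1: "binary_obs 2 (pm a00 b00)" "binary_obs 2 (pm a01 b01)" "binary_obs 2 (pm a10 b10)" "binary_obs 2 (pm a11 b11)"
    unfolding a00_def b00_def a01_def b01_def a10_def b10_def a11_def b11_def
    by (intro pm_binary div_s2 two)+
  have sig: "binary_obs 2 sigma_z" "binary_obs 2 sigma_x" "binary_obs 2 (- sigma_x)"
    unfolding neg_sigma_x_pm unfolding sigma_z_pm sigma_x_pm by (intro pm_binary; simp)+
  have fk: "sqrt ((((- \<kappa> + c) - (\<kappa> + c))^2 + ((\<kappa> + c) - (- \<kappa> + c))^2) / 2) = 2 * \<kappa>"
    "sqrt ((((\<kappa> - c) - (- \<kappa> - c))^2 + ((\<kappa> + c) - (- \<kappa> + c))^2) / 2) = 2 * \<kappa>"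
  proof -
    have e: "(((- \<kappa> + c) - (\<kappa> + c))^2 + ((\<kappa> + c) - (- \<kappa> + c))^2) / 2 = (2 * \<kappa>)^2"
      "(((\<kappa> - c) - (- \<kappa> - c))^2 + ((\<kappa> + c) - (- \<kappa> + c))^2) / 2 = (2 * \<kappa>)^2"
      by (simp_all add: power2_eq_square algebra_simps)
    show "sqrt ((((- \<kappa> + c) - (\<kappa> + c))^2 + ((\<kappa> + c) - (- \<kappa> + c))^2) / 2) = 2 * \<kappa>"
      unfolding e(1) real_sqrt_abs using k0 by simp
    show "sqrt ((((\<kappa> - c) - (- \<kappa> - c))^2 + ((\<kappa> + c) - (- \<kappa> + c))^2) / 2) = 2 * \<kappa>"
      unfolding e(2) real_sqrt_abs using k0 by simp
  qed
  have op1: "opnorm (pm a00 b00 - pm a01 b01) \<le> 2 * \<kappa>"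
    using opnorm_pm_diff[of a00 b00 a01 b01] fk(1)
    unfolding a00_def b00_def a01_def b01_def diff_s2 by simp
  have op2: "opnorm (pm a10 b10 - pm a11 b11) \<le> 2 * \<kappa>"
    using opnorm_pm_diff[of a10 b10 a11 b11] fk(2)
    unfolding a10_def b10_def a11_def b11_def diff_s2 by simp
  have cfg1: "chsh_config \<kappa> 2 2 phi_plus sigma_z sigma_x (pm a00 b00) (pm a01 b01) (pm a10 b10) (pm a11 b11)"
    unfolding chsh_config_def using phi_carrier phi_norm sig bin1 op1 op2 by simp
  have sc1: "chsh_score phi_plus sigma_z sigma_x (pm a00 b00) (pm a01 b01) (pm a10 b10) (pm a11 b11) = 2 * sqrt 2 * (\<kappa> + c)"
  proof -
    have "chsh_score phi_plus sigma_z sigma_x (pm a00 b00) (pm a01 b01) (pm a10 b10) (pm a11 b11) = b00 + b10 + a01 - a11"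
      unfolding chsh_score_def sigma_z_pm sigma_x_pm expect_pm by simp
    also have "\<dots> = (4 * (\<kappa> + c)) / sqrt 2"
      unfolding a00_def b00_def a01_def b01_def a10_def b10_def a11_def b11_def
      by (simp add: add_divide_distrib[symmetric] diff_divide_distrib[symmetric])
    also have "\<dots> = (4 / sqrt 2) * (\<kappa> + c)" by simp
    finally show ?thesis unfolding four_div_s2 .
  qed
  have in1: "2 * sqrt 2 * (\<kappa> + c) \<in> chsh_vals \<kappa>"
    unfolding chsh_vals_def using cfg1 sc1 by force
  have cfg2: "1 / sqrt 2 \<le> \<kappa> \<Longrightarrow> chsh_config \<kappa> 2 2 phi_plus sigma_z sigma_x sigma_z sigma_x sigma_z (- sigma_x)"
  proof -
    assume big: "1 / sqrt 2 \<le> \<kappa>"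
    have s2: "sqrt 2 \<le> 2 * \<kappa>"
    proof -
      have "2 * (1 / sqrt 2) \<le> 2 * \<kappa>" using big by simp
      moreover have "2 * (1 / sqrt 2) = sqrt 2" using four_div_s2 by (simp add: field_simps)
      ultimately show ?thesis by simp
    qed
    have "opnorm (sigma_z - sigma_x) \<le> sqrt 2"
      using opnorm_pm_diff[of 0 1 1 0] unfolding sigma_z_pm sigma_x_pm by simp
    moreover have "opnorm (sigma_z - - sigma_x) \<le> sqrt 2"
      using opnorm_pm_diff[of 0 1 "-1" 0] unfolding neg_sigma_x_pm unfolding sigma_z_pm by simp
    ultimately show ?thesis
      unfolding chsh_config_def using phi_carrier phi_norm sig s2 by simp
  qed
  have sc2: "chsh_score phi_plus sigma_z sigma_x sigma_z sigma_x sigma_z (- sigma_x) = 4"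
    unfolding chsh_score_def neg_sigma_x_pm unfolding sigma_z_pm sigma_x_pm expect_pm by simp
  have in2: "1 / sqrt 2 \<le> \<kappa> \<Longrightarrow> 4 \<in> chsh_vals \<kappa>"
    unfolding chsh_vals_def using cfg2 sc2 by force
  have Vin: "V \<in> chsh_vals \<kappa>"
    using in1 in2 unfolding V_def by auto
  have SV: "S_q \<kappa> = V"
    unfolding S_q_def by (rule cSup_eq_maximum[OF Vin]) (use ub in auto)
  have V4: "1 / sqrt 2 \<le> \<kappa> \<Longrightarrow> V = 4"
  proof -
    assume big: "1 / sqrt 2 \<le> \<kappa>"
    have "4 \<le> V" using ub in2[OF big] by auto
    moreover have "V \<le> 4" unfolding V_def using Vle4 by auto
    ultimately show "V = 4" by simp
  qed
  have part3: "\<kappa> \<le> 1 / sqrt 2 \<longrightarrow>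
        (let B00 = complex_of_real ((- \<kappa> + c) / sqrt 2) \<cdot>\<^sub>m sigma_x
                   + complex_of_real ((\<kappa> + c) / sqrt 2) \<cdot>\<^sub>m sigma_z;
             B01 = complex_of_real ((\<kappa> + c) / sqrt 2) \<cdot>\<^sub>m sigma_x
                   + complex_of_real ((- \<kappa> + c) / sqrt 2) \<cdot>\<^sub>m sigma_z;
             B10 = complex_of_real ((\<kappa> - c) / sqrt 2) \<cdot>\<^sub>m sigma_x
                   + complex_of_real ((\<kappa> + c) / sqrt 2) \<cdot>\<^sub>m sigma_z;
             B11 = complex_of_real ((- \<kappa> - c) / sqrt 2) \<cdot>\<^sub>m sigma_x
                   + complex_of_real ((- \<kappa> + c) / sqrt 2) \<cdot>\<^sub>m sigma_z
         in chsh_config \<kappa> 2 2 phi_plus sigma_z sigma_x B00 B01 B10 B11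
            \<and> chsh_score phi_plus sigma_z sigma_x B00 B01 B10 B11 = S_q \<kappa>)"
  proof
    assume small: "\<kappa> \<le> 1 / sqrt 2"
    show "let B00 = complex_of_real ((- \<kappa> + c) / sqrt 2) \<cdot>\<^sub>m sigma_x
                   + complex_of_real ((\<kappa> + c) / sqrt 2) \<cdot>\<^sub>m sigma_z;
             B01 = complex_of_real ((\<kappa> + c) / sqrt 2) \<cdot>\<^sub>m sigma_x
                   + complex_of_real ((- \<kappa> + c) / sqrt 2) \<cdot>\<^sub>m sigma_z;
             B10 = complex_of_real ((\<kappa> - c) / sqrt 2) \<cdot>\<^sub>m sigma_x
                   + complex_of_real ((\<kappa> + c) / sqrt 2) \<cdot>\<^sub>m sigma_z;
             B11 = complex_of_real ((- \<kappa> - c) / sqrt 2) \<cdot>\<^sub>m sigma_x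
                   + complex_of_real ((- \<kappa> + c) / sqrt 2) \<cdot>\<^sub>m sigma_z
         in chsh_config \<kappa> 2 2 phi_plus sigma_z sigma_x B00 B01 B10 B11
            \<and> chsh_score phi_plus sigma_z sigma_x B00 B01 B10 B11 = S_q \<kappa>"
      unfolding Let_def pm_lin
      using cfg1[unfolded a00_def b00_def a01_def b01_def a10_def b10_def a11_def b11_def]
        sc1[unfolded a00_def b00_def a01_def b01_def a10_def b10_def a11_def b11_def] SV small
      unfolding V_def by simp
  qed
  show ?thesis
    using SV ub part3 cfg2 sc2 V4 unfolding V_def[symmetric] by auto
qed

end
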